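(* Let $k\ge 2$ and $s\ge 0$ be integers. For positive integers $n,m$ let $a_{n,m}$ denote the number of ways to place $s$ pairwise non-overlapping $k$-mers on the $n\times m$ rectangular lattice with open (free) boundary conditions in both directions. Then for all $n\ge (k+1)s$ and $m\ge (k+1)s$, $$\sum_{i=0}^{2s}(-1)^i\binom{2s}{i}a_{n-i,m-i}=2^s\frac{(2s)!}{s!}.$$
   Context: The lattice is the set of sites $\{1,\dots,n\}\times\{1,\dots,m\}$ with open boundary conditions in both directions (no wrap-around). A $k$-mer is a rigid linear polymer occupying $k$ consecutive sites of a single row or of a single column. A configuration is a set of $s$ $k$-mers no two of which share a site; unoccupied sites are monomers. $a_{n,m}$ (which depends on $k$ and $s$) counts such configurations; for $s=0$ it equals $1$. *)

theory Defs
  imports Complex_Main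
begin

text \<open>Sites of the n x m lattice are pairs (i,j) with 1 \<le> i \<le> n (row), 1 \<le> j \<le> m (column).
  A k-mer is the set of k consecutive sites in one row or in one column.\<close>

definition kmers :: "nat \<Rightarrow> nat \<Rightarrow> nat \<Rightarrow> (nat \<times> nat) set set" where
  "kmers k n m =
     {{(i, j + t) | t. t < k} | i j. 1 \<le> i \<and> i \<le> n \<and> 1 \<le> j \<and> j + k \<le> m + 1}
   \<union> {{(i + t, j) | t. t < k} | i j. 1 \<le> i \<and> i + k \<le> n + 1 \<and> 1 \<le> j \<and> j \<le> m}"

definition kmer_count :: "nat \<Rightarrow> nat \<Rightarrow> nat \<Rightarrow> nat \<Rightarrow> nat" where
  "kmer_count k s n m =
     card {C. C \<subseteq> kmers k n m \<and> card C = s \<and>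
              (\<forall>A\<in>C. \<forall>B\<in>C. A \<noteq> B \<longrightarrow> A \<inter> B = {})}"

end

theory Submission
  imports Defs "HOL-Computational_Algebra.Polynomial" "HOL-Library.FuncSet"
    "HOL-Combinatorics.Multiset_Permutations"
begin

definition MM :: "nat \<Rightarrow> nat \<Rightarrow> real" where
  "MM K j = (\<Sum>i\<le>K. (-1)^i * real (K choose i) * (real i)^j)"

lemma MM_Suc: "MM (Suc K) (Suc j) = - real (Suc K) * (\<Sum>t\<le>j. real (j choose t) * MM K t)"
proof -
  have "MM (Suc K) (Suc j) = (\<Sum>i\<le>K. (-1)^(Suc i) * real (Suc K choose Suc i) * (real (Suc i))^(Suc j))"
    unfolding MM_def by (subst sum.atMost_Suc_shift) simp
  also have "\<dots> = (\<Sum>i\<le>K. - real (Suc K) * ((-1)^i * real (K choose i) * (real i + 1)^j))"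
  proof (rule sum.cong[OF refl])
    fix i assume "i \<in> {..K}"
    have e: "real (Suc i) * real (Suc K choose Suc i) = real (Suc K) * real (K choose i)"
      using Suc_times_binomial[of i K] by (metis of_nat_mult)
    have "(-1::real)^(Suc i) * real (Suc K choose Suc i) * (real (Suc i))^(Suc j)
        = - ((-1)^i * (real (Suc i) * real (Suc K choose Suc i)) * (real (Suc i))^j)"
      by (simp add: algebra_simps)
    also have "\<dots> = - real (Suc K) * ((-1)^i * real (K choose i) * (real i + 1)^j)"
      by (simp only: e) (simp add: algebra_simps)
    finally show "(-1::real)^(Suc i) * real (Suc K choose Suc i) * (real (Suc i))^(Suc j)
        = - real (Suc K) * ((-1)^i * real (K choose i) * (real i + 1)^j)" .
  qed
  also have "\<dots> = - real (Suc K) * (\<Sum>i\<le>K. (-1)^i * real (K choose i) * (\<Sum>t\<le>j. real (j choose t) * (real i)^t))"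
  proof -
    have b: "(real i + 1)^j = (\<Sum>t\<le>j. real (j choose t) * (real i)^t)" for i
      using binomial_ring[of "real i" 1 j] by simp
    show ?thesis by (simp only: b) (simp add: sum_distrib_left)
  qed
  also have "\<dots> = - real (Suc K) * (\<Sum>t\<le>j. real (j choose t) * MM K t)"
    unfolding MM_def sum_distrib_left sum_distrib_right
    by (subst sum.swap) (simp add: algebra_simps)
  finally show ?thesis .
qed

lemma MM_val: "j \<le> K \<Longrightarrow> MM K j = (if j = K then (-1)^K * fact K else 0)"
proof (induction K arbitrary: j)
  case 0
  then show ?case by (simp add: MM_def)
next
  case (Suc K)
  show ?case
  proof (cases j)
    case 0
    have "MM (Suc K) 0 = (\<Sum>i\<le>Suc K. (-1)^i * of_nat (Suc K choose i))"
      unfolding MM_def by simp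
    also have "\<dots> = 0" by (rule choose_alternating_sum) simp
    finally show ?thesis using 0 by simp
  next
    case (Suc j')
    with Suc.prems have jK: "j' \<le> K" by simp
    have "(\<Sum>t\<le>j'. real (j' choose t) * MM K t) = (\<Sum>t\<le>j'. if t = K then (-1)^K * fact K else 0)"
      by (rule sum.cong[OF refl]) (use jK Suc.IH in auto)
    also have "\<dots> = (if j' = K then (-1)^K * fact K else 0)"
      using jK by (auto simp: sum.delta')
    finally show ?thesis using Suc MM_Suc[of K j'] by (auto simp: algebra_simps)
  qed
qed

lemma poly_sum_upto:
  fixes p :: "real poly"
  assumes "degree p \<le> K"
  shows "poly p x = (\<Sum>j\<le>K. coeff p j * x ^ j)"
proof -
  have "poly p x = (\<Sum>j\<le>degree p. coeff p j * x ^ j)" by (simp add: poly_altdef)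
  also have "\<dots> = (\<Sum>j\<le>K. coeff p j * x ^ j)"
    by (rule sum.mono_neutral_left) (use assms in \<open>auto simp: le_degree\<close>)
  finally show ?thesis .
qed

lemma FD_poly:
  fixes p :: "real poly"
  assumes "degree p \<le> K"
  shows "(\<Sum>i\<le>K. (-1)^i * real (K choose i) * poly p (real i)) = (-1)^K * fact K * coeff p K"
proof -
  have "(\<Sum>i\<le>K. (-1)^i * real (K choose i) * poly p (real i))
      = (\<Sum>i\<le>K. \<Sum>j\<le>K. coeff p j * ((-1)^i * real (K choose i) * real i ^ j))"
    by (simp add: poly_sum_upto[OF assms] sum_distrib_left algebra_simps)
  also have "\<dots> = (\<Sum>j\<le>K. coeff p j * MM K j)"
    unfolding MM_def sum_distrib_left by (rule sum.swap)
  also have "\<dots> = (\<Sum>j\<le>K. if j = K then coeff p K * ((-1)^K * fact K) else 0)"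
    by (rule sum.cong[OF refl]) (auto simp: MM_val)
  also have "\<dots> = (-1)^K * fact K * coeff p K" by simp
  finally show ?thesis .
qed

definition sol1 :: "nat set \<Rightarrow> (nat \<Rightarrow> int) \<Rightarrow> (nat \<Rightarrow> int) \<Rightarrow> (nat \<times> nat \<times> int) set \<Rightarrow> int \<Rightarrow> (nat \<Rightarrow> int) set" where
  "sol1 V p q Cs N = {r \<in> V \<rightarrow>\<^sub>E (UNIV::int set). (\<forall>a\<in>V. 1 \<le> r a + p a \<and> r a + q a \<le> N) \<and> (\<forall>(a,b,x)\<in>Cs. r a - r b = x)}"

definition good1 :: "nat set \<Rightarrow> (nat \<Rightarrow> int) \<Rightarrow> (nat \<Rightarrow> int) \<Rightarrow> (nat \<times> nat \<times> int) set \<Rightarrow> bool" where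
  "good1 V p q Cs \<longleftrightarrow> (\<forall>a\<in>V. p a \<le> q a) \<and> (\<forall>(a,b,x)\<in>Cs. a\<in>V \<and> b\<in>V \<and> x + p a \<le> q b \<and> p b \<le> x + q a)"

lemma box_count:
  assumes "finite V"
  shows "card {r \<in> V \<rightarrow>\<^sub>E (UNIV::int set). \<forall>a\<in>V. 1 \<le> r a + p a \<and> r a + q a \<le> N}
         = (\<Prod>a\<in>V. nat (N - (q a - p a)))"
proof -
  have "{r \<in> V \<rightarrow>\<^sub>E (UNIV::int set). \<forall>a\<in>V. 1 \<le> r a + p a \<and> r a + q a \<le> N}
        = PiE V (\<lambda>a. {1 - p a .. N - q a})"
    by (auto simp: PiE_def Pi_def)
  then show ?thesis using assms by (simp add: card_PiE algebra_simps)
qed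

lemma elim1:
  assumes "finite V" "good1 V p q Cs"
  shows "\<exists>P::real poly. degree P + (if \<exists>(a,b,x)\<in>Cs. a \<noteq> b then 1 else 0) \<le> card V \<and>
           (\<forall>N. (\<Sum>a\<in>V. q a - p a) \<le> N \<longrightarrow> real (card (sol1 V p q Cs N)) = poly P (of_int N))"
  using assms
proof (induction "card V" arbitrary: V p q Cs rule: less_induct)
  case less
  show ?case
  proof (cases "\<exists>(a,b,x)\<in>Cs. a \<noteq> b")
    case False
    show ?thesis
    proof (cases "\<exists>(a,b,x)\<in>Cs. x \<noteq> 0")
      case True
      then obtain a b x where abx: "(a,b,x) \<in> Cs" "x \<noteq> 0" by auto
      with False have "a = b" by auto
      have "sol1 V p q Cs N = {}" for N
      proof -
        have "r a - r b = x" if "r \<in> sol1 V p q Cs N" for r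
        proof -
          have H: "\<forall>t\<in>Cs. case t of (c,d,y) \<Rightarrow> r c - r d = y"
            using that unfolding sol1_def by auto
          show ?thesis using bspec[OF H abx(1)] by simp
        qed
        then show ?thesis using abx \<open>a = b\<close> by force
      qed
      then show ?thesis using False by (intro exI[of _ 0]) simp
    next
      case nz: False
      have eq: "sol1 V p q Cs N = {r \<in> V \<rightarrow>\<^sub>E (UNIV::int set). \<forall>a\<in>V. 1 \<le> r a + p a \<and> r a + q a \<le> N}" for N
      proof -
        have triv: "\<forall>(a,b,x)\<in>Cs. r a - r b = x" for r using False nz by fastforce
        show ?thesis unfolding sol1_def using triv by simp
      qed
      define P :: "real poly" where "P = (\<Prod>a\<in>V. [:- of_int (q a - p a), 1:])"
      have dP: "degree P \<le> card V"
        unfolding P_def using degree_prod_sum_le[OF less.prems(1), of "\<lambda>a. [:- of_int (q a - p a), 1:]"]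
        by simp
      have "real (card (sol1 V p q Cs N)) = poly P (of_int N)" if N: "(\<Sum>a\<in>V. q a - p a) \<le> N" for N
      proof -
        have w: "q a - p a \<le> N" if "a \<in> V" for a
        proof -
          have "q a - p a \<le> (\<Sum>a\<in>V. q a - p a)"
            by (rule member_le_sum) (use that less.prems in \<open>auto simp: good1_def\<close>)
          then show ?thesis using N by linarith
        qed
        have "real (card (sol1 V p q Cs N)) = real (\<Prod>a\<in>V. nat (N - (q a - p a)))"
          by (simp add: eq box_count[OF less.prems(1)])
        also have "\<dots> = (\<Prod>a\<in>V. of_int (N - (q a - p a)))"
          by (simp add: of_nat_prod) (rule prod.cong[OF refl], use w in auto)
        also have "\<dots> = poly P (of_int N)"
          unfolding P_def by (simp add: poly_prod algebra_simps)
        finally show ?thesis .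
      qed
      then show ?thesis using dP False by (intro exI[of _ P]) simp
    qed
  next
    case True
    then obtain a b x where abx: "(a,b,x) \<in> Cs" "a \<noteq> b" by auto
    have aV: "a \<in> V" and bV: "b \<in> V" and ov: "x + p a \<le> q b" "p b \<le> x + q a"
      using abx less.prems(2) unfolding good1_def by auto
    define V' where "V' = V - {b}"
    define p' where "p' = p(a := min (p a) (p b - x))"
    define q' where "q' = q(a := max (q a) (q b - x))"
    define ren where "ren = (\<lambda>c::nat. if c = b then a else c)"
    define sh where "sh = (\<lambda>c::nat. if c = b then x else 0)"
    define Cs' where "Cs' = (\<lambda>(c,d,y). (ren c, ren d, y + sh c - sh d)) ` Cs"
    have cardV': "card V' < card V"
      unfolding V'_def using bV less.prems(1) by (intro card_Diff1_less)
    have aV': "a \<in> V'" using aV abx unfolding V'_def by auto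
    have F1: "p' (ren c) \<le> p c - sh c" for c
      unfolding p'_def ren_def sh_def using \<open>a \<noteq> b\<close> by auto
    have F2: "q c - sh c \<le> q' (ren c)" for c
      unfolding q'_def ren_def sh_def using \<open>a \<noteq> b\<close> by auto
    have pa': "p' a = min (p a) (p b - x)" "q' a = max (q a) (q b - x)"
      unfolding p'_def q'_def by auto
    have pc': "p' c = p c" "q' c = q c" if "c \<noteq> a" for c
      unfolding p'_def q'_def using that by auto
    have renV: "c \<in> V \<Longrightarrow> ren c \<in> V'" for c
      using aV' unfolding ren_def V'_def by auto
    have good': "good1 V' p' q' Cs'"
      unfolding good1_def
    proof (intro conjI ballI)
      fix c assume "c \<in> V'"
      then show "p' c \<le> q' c"
        using less.prems(2) unfolding good1_def p'_def q'_def V'_def by auto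
    next
      fix t assume "t \<in> Cs'"
      then obtain c d y where cdy: "(c,d,y) \<in> Cs" and t: "t = (ren c, ren d, y + sh c - sh d)"
        unfolding Cs'_def by auto
      from cdy less.prems(2) have cV: "c \<in> V" and dV: "d \<in> V" and o1: "y + p c \<le> q d" and o2: "p d \<le> y + q c"
        unfolding good1_def by auto
      show "case t of (c, d, y) \<Rightarrow> c \<in> V' \<and> d \<in> V' \<and> y + p' c \<le> q' d \<and> p' d \<le> y + q' c"
        unfolding t using renV[OF cV] renV[OF dV] o1 o2 F1[of c] F1[of d] F2[of c] F2[of d]
        by auto
    qed
    obtain P where P1: "degree P + (if \<exists>(a,b,x)\<in>Cs'. a \<noteq> b then 1 else 0) \<le> card V'"
      and P2: "\<forall>N. (\<Sum>a\<in>V'. q' a - p' a) \<le> N \<longrightarrow> real (card (sol1 V' p' q' Cs' N)) = poly P (of_int N)"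
      using less.hyps[OF cardV' _ good'] less.prems(1) unfolding V'_def by auto
    have wt: "(\<Sum>c\<in>V'. q' c - p' c) \<le> (\<Sum>c\<in>V. q c - p c)"
    proof -
      have fV': "finite V'" using less.prems(1) unfolding V'_def by auto
      have e1: "(\<Sum>c\<in>V'. q' c - p' c) = (q' a - p' a) + (\<Sum>c\<in>V' - {a}. q' c - p' c)"
        using fV' aV' by (simp add: sum.remove)
      have e2: "(\<Sum>c\<in>V' - {a}. q' c - p' c) = (\<Sum>c\<in>V' - {a}. q c - p c)"
        by (rule sum.cong) (auto simp: p'_def q'_def)
      have e3: "(\<Sum>c\<in>V. q c - p c) = (q b - p b) + (\<Sum>c\<in>V'. q c - p c)"
        using less.prems(1) bV unfolding V'_def by (simp add: sum.remove)
      have e4: "(\<Sum>c\<in>V'. q c - p c) = (q a - p a) + (\<Sum>c\<in>V' - {a}. q c - p c)"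
        using fV' aV' by (simp add: sum.remove)
      have e5: "q' a - p' a \<le> (q a - p a) + (q b - p b)"
      proof -
        have "p a \<le> q a" "p b \<le> q b" using aV bV less.prems(2) unfolding good1_def by auto
        then show ?thesis using ov unfolding p'_def q'_def by (simp add: min_def max_def)
      qed
      show ?thesis using e1 e2 e3 e4 e5 by linarith
    qed
    have cnt: "card (sol1 V p q Cs N) = card (sol1 V' p' q' Cs' N)" for N
    proof (rule bij_betw_same_card)
      show "bij_betw (\<lambda>r. restrict r V') (sol1 V p q Cs N) (sol1 V' p' q' Cs' N)"
      proof (rule bij_betw_byWitness[where f' = "\<lambda>r'. r'(b := r' a - x)"])
        show "\<forall>r\<in>sol1 V p q Cs N. (restrict r V')(b := restrict r V' a - x) = r"
        proof
          fix r assume r: "r \<in> sol1 V p q Cs N"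
          then have "r a - r b = x" using abx unfolding sol1_def by auto
          moreover have "r c = undefined" if "c \<notin> V" for c using r that unfolding sol1_def by auto
          ultimately show "(restrict r V')(b := restrict r V' a - x) = r"
            using aV' unfolding V'_def by (auto simp: fun_eq_iff)
        qed
        show "\<forall>r'\<in>sol1 V' p' q' Cs' N. restrict (r'(b := r' a - x)) V' = r'"
          unfolding sol1_def V'_def by (auto simp: fun_eq_iff PiE_def extensional_def)
        show "(\<lambda>r. restrict r V') ` sol1 V p q Cs N \<subseteq> sol1 V' p' q' Cs' N"
        proof
          fix r' assume "r' \<in> (\<lambda>r. restrict r V') ` sol1 V p q Cs N"
          then obtain r where r: "r \<in> sol1 V p q Cs N" and r': "r' = restrict r V'" by auto
          have rab: "r a - r b = x" using r abx unfolding sol1_def by auto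
          have rren: "r (ren c) = r c + sh c" for c
            using rab unfolding ren_def sh_def by auto
          have box: "\<forall>c\<in>V. 1 \<le> r c + p c \<and> r c + q c \<le> N" and cs: "\<forall>(c,d,y)\<in>Cs. r c - r d = y"
            using r unfolding sol1_def by auto
          show "r' \<in> sol1 V' p' q' Cs' N"
            unfolding sol1_def
          proof (intro CollectI conjI ballI)
            show "r' \<in> V' \<rightarrow>\<^sub>E UNIV" unfolding r' by auto
          next
            fix c assume c: "c \<in> V'"
            show "1 \<le> r' c + p' c" "r' c + q' c \<le> N"
            proof -
              have cV: "c \<in> V" and cb: "c \<noteq> b" using c unfolding V'_def by auto
              have "1 \<le> r c + p' c \<and> r c + q' c \<le> N"
              proof (cases "c = a")
                case True
                then show ?thesis using box aV bV rab pa' by (auto simp: min_def max_def)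
              next
                case False
                then show ?thesis using box cV pc'[OF False] by auto
              qed
              then show "1 \<le> r' c + p' c" "r' c + q' c \<le> N" using c unfolding r' by auto
            qed
          next
            fix t assume "t \<in> Cs'"
            then obtain c d y where cdy: "(c,d,y) \<in> Cs" and t: "t = (ren c, ren d, y + sh c - sh d)"
              unfolding Cs'_def by auto
            have "c \<in> V" "d \<in> V" using cdy less.prems(2) unfolding good1_def by auto
            then have "ren c \<in> V'" "ren d \<in> V'" using renV by auto
            then show "case t of (c, d, y) \<Rightarrow> r' c - r' d = y"
              unfolding t r' using rren[of c] rren[of d] cs cdy by auto
          qed
        qed
        show "(\<lambda>r'. r'(b := r' a - x)) ` sol1 V' p' q' Cs' N \<subseteq> sol1 V p q Cs N"
        proof
          fix r assume "r \<in> (\<lambda>r'. r'(b := r' a - x)) ` sol1 V' p' q' Cs' N"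
          then obtain r' where r': "r' \<in> sol1 V' p' q' Cs' N" and r: "r = r'(b := r' a - x)" by auto
          have box: "\<forall>c\<in>V'. 1 \<le> r' c + p' c \<and> r' c + q' c \<le> N" and cs: "\<forall>(c,d,y)\<in>Cs'. r' c - r' d = y"
            and ext: "r' \<in> V' \<rightarrow>\<^sub>E UNIV"
            using r' unfolding sol1_def by auto
          have rren: "r (ren c) = r c + sh c" for c
            unfolding r ren_def sh_def using \<open>a \<noteq> b\<close> by auto
          have rV': "r c = r' c" if "c \<noteq> b" for c unfolding r using that by auto
          show "r \<in> sol1 V p q Cs N"
            unfolding sol1_def
          proof (intro CollectI conjI ballI)
            show "r \<in> V \<rightarrow>\<^sub>E UNIV" using ext bV unfolding r V'_def by (auto simp: PiE_def extensional_def)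
          next
            fix c assume c: "c \<in> V"
            show "1 \<le> r c + p c" "r c + q c \<le> N"
            proof -
              have "1 \<le> r c + p c \<and> r c + q c \<le> N"
              proof (cases "c = b")
                case True
                have "r c = r' a - x" unfolding r True by simp
                moreover have "1 \<le> r' a + p' a" "r' a + q' a \<le> N" using box aV' by auto
                ultimately show ?thesis using pa' True by (auto simp: min_def max_def split: if_splits)
              next
                case False
                then have "c \<in> V'" using c unfolding V'_def by auto
                have rc: "r c = r' c" using rV' False by auto
                have "1 \<le> r' c + p' c" "r' c + q' c \<le> N" using box \<open>c \<in> V'\<close> by auto
                moreover have "p' c \<le> p c" "q c \<le> q' c"
                  using F1[of c] F2[of c] False unfolding ren_def sh_def by auto
                ultimately show ?thesis using rc by auto
              qed
              then show "1 \<le> r c + p c" "r c + q c \<le> N" by auto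
            qed
          next
            fix t assume t: "t \<in> Cs"
            obtain c d y where cdy: "t = (c,d,y)" by (cases t) auto
            have "(ren c, ren d, y + sh c - sh d) \<in> Cs'" using t cdy unfolding Cs'_def by force
            then have "r' (ren c) - r' (ren d) = y + sh c - sh d" using cs by auto
            moreover have "ren c \<noteq> b" "ren d \<noteq> b" unfolding ren_def using \<open>a \<noteq> b\<close> by auto
            ultimately have "r (ren c) - r (ren d) = y + sh c - sh d" using rV' by auto
            then show "case t of (c, d, y) \<Rightarrow> r c - r d = y"
              unfolding cdy using rren[of c] rren[of d] by auto
          qed
        qed
      qed
    qed
    show ?thesis
    proof (intro exI[of _ P] conjI allI impI)
      show "degree P + (if \<exists>(a,b,x)\<in>Cs. a \<noteq> b then 1 else 0) \<le> card V"
        using P1 cardV' True by auto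
    next
      fix N assume "(\<Sum>a\<in>V. q a - p a) \<le> N"
      then show "real (card (sol1 V p q Cs N)) = poly P (of_int N)"
        using P2 wt cnt by auto
    qed
  qed
qed

definition dv :: "nat \<Rightarrow> bool \<Rightarrow> int" where "dv k hz = (if hz then 0 else int k - 1)"
definition dh :: "nat \<Rightarrow> bool \<Rightarrow> int" where "dh k hz = (if hz then int k - 1 else 0)"

definition kcell :: "nat \<Rightarrow> bool \<times> int \<times> int \<Rightarrow> (nat \<times> nat) set" where
  "kcell k u = (case u of (hz, i, j) \<Rightarrow>
     (if hz then {(nat i, nat j + t) | t. t < k} else {(nat i + t, nat j) | t. t < k}))"

definition Box :: "nat \<Rightarrow> nat \<Rightarrow> nat \<Rightarrow> (bool \<times> int \<times> int) set" where
  "Box k n m = {(hz, i, j). 1 \<le> i \<and> i + dv k hz \<le> int n \<and> 1 \<le> j \<and> j + dh k hz \<le> int m}"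

definition ovA :: "nat \<Rightarrow> bool \<Rightarrow> int \<Rightarrow> int \<Rightarrow> bool \<Rightarrow> bool" where
  "ovA k hz x y hz' = (if hz \<and> hz' then x = 0 \<and> \<bar>y\<bar> < int k
     else if \<not> hz \<and> \<not> hz' then y = 0 \<and> \<bar>x\<bar> < int k
     else if hz \<and> \<not> hz' then 0 \<le> x \<and> x < int k \<and> - int k < y \<and> y \<le> 0
     else - int k < x \<and> x \<le> 0 \<and> 0 \<le> y \<and> y < int k)"

lemma kmers_eq:
  assumes "k \<ge> 1"
  shows "kmers k n m = kcell k ` Box k n m"
proof
  show "kmers k n m \<subseteq> kcell k ` Box k n m"
  proof
    fix X assume "X \<in> kmers k n m"
    then consider (H) i j where "X = {(i, j + t) | t. t < k}" "1 \<le> i" "i \<le> n" "1 \<le> j" "j + k \<le> m + 1"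
      | (V) i j where "X = {(i + t, j) | t. t < k}" "1 \<le> i" "i + k \<le> n + 1" "1 \<le> j" "j \<le> m"
      unfolding kmers_def by blast
    then show "X \<in> kcell k ` Box k n m"
    proof cases
      case H
      have "(True, int i, int j) \<in> Box k n m" using H assms by (auto simp: Box_def dv_def dh_def)
      moreover have "X = kcell k (True, int i, int j)" using H by (simp add: kcell_def)
      ultimately show ?thesis by blast
    next
      case V
      have "(False, int i, int j) \<in> Box k n m" using V assms by (auto simp: Box_def dv_def dh_def)
      moreover have "X = kcell k (False, int i, int j)" using V by (simp add: kcell_def)
      ultimately show ?thesis by blast
    qed
  qed
next
  show "kcell k ` Box k n m \<subseteq> kmers k n m"
  proof
    fix X assume "X \<in> kcell k ` Box k n m"
    then obtain hz i j where B: "(hz, i, j) \<in> Box k n m" and X: "X = kcell k (hz, i, j)" by auto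
    show "X \<in> kmers k n m"
    proof (cases hz)
      case True
      then have "X = {(nat i, nat j + t) | t. t < k}" "1 \<le> nat i" "nat i \<le> n" "1 \<le> nat j" "nat j + k \<le> m + 1"
        using B X assms by (auto simp: Box_def dv_def dh_def kcell_def)
      then show ?thesis unfolding kmers_def by blast
    next
      case False
      then have "X = {(nat i + t, nat j) | t. t < k}" "1 \<le> nat i" "nat i + k \<le> n + 1" "1 \<le> nat j" "nat j \<le> m"
        using B X assms by (auto simp: Box_def dv_def dh_def kcell_def)
      then show ?thesis unfolding kmers_def by blast
    qed
  qed
qed

lemma kcell_ov:
  assumes "1 \<le> i" "1 \<le> j" "1 \<le> i'" "1 \<le> j'"
  shows "kcell k (hz, i, j) \<inter> kcell k (hz', i', j') \<noteq> {} \<longleftrightarrow> ovA k hz (i - i') (j - j') hz'"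
proof (cases hz; cases hz')
  assume hz: hz hz'
  have "kcell k (hz, i, j) \<inter> kcell k (hz', i', j') \<noteq> {} \<longleftrightarrow> (\<exists>t t'. t < k \<and> t' < k \<and> nat i = nat i' \<and> nat j + t = nat j' + t')"
    using hz by (auto simp: kcell_def)
  also have "\<dots> \<longleftrightarrow> ovA k hz (i - i') (j - j') hz'"
  proof
    assume "\<exists>t t'. t < k \<and> t' < k \<and> nat i = nat i' \<and> nat j + t = nat j' + t'"
    then show "ovA k hz (i - i') (j - j') hz'" using hz assms by (auto simp: ovA_def)
  next
    assume A: "ovA k hz (i - i') (j - j') hz'"
    show "\<exists>t t'. t < k \<and> t' < k \<and> nat i = nat i' \<and> nat j + t = nat j' + t'"
      apply (rule exI[of _ "nat (j' - j)"], rule exI[of _ "nat (j - j')"])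
      using A hz assms by (auto simp: ovA_def)
  qed
  finally show ?thesis .
next
  assume hz: hz "\<not> hz'"
  have "kcell k (hz, i, j) \<inter> kcell k (hz', i', j') \<noteq> {} \<longleftrightarrow> (\<exists>t t'. t < k \<and> t' < k \<and> nat i = nat i' + t' \<and> nat j + t = nat j')"
    using hz by (auto simp: kcell_def)
  also have "\<dots> \<longleftrightarrow> ovA k hz (i - i') (j - j') hz'"
  proof
    assume "\<exists>t t'. t < k \<and> t' < k \<and> nat i = nat i' + t' \<and> nat j + t = nat j'"
    then show "ovA k hz (i - i') (j - j') hz'" using hz assms by (auto simp: ovA_def)
  next
    assume A: "ovA k hz (i - i') (j - j') hz'"
    show "\<exists>t t'. t < k \<and> t' < k \<and> nat i = nat i' + t' \<and> nat j + t = nat j'"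
      apply (rule exI[of _ "nat (j' - j)"], rule exI[of _ "nat (i - i')"])
      using A hz assms by (auto simp: ovA_def)
  qed
  finally show ?thesis .
next
  assume hz: "\<not> hz" hz'
  have "kcell k (hz, i, j) \<inter> kcell k (hz', i', j') \<noteq> {} \<longleftrightarrow> (\<exists>t t'. t < k \<and> t' < k \<and> nat i + t = nat i' \<and> nat j = nat j' + t')"
    using hz by (auto simp: kcell_def)
  also have "\<dots> \<longleftrightarrow> ovA k hz (i - i') (j - j') hz'"
  proof
    assume "\<exists>t t'. t < k \<and> t' < k \<and> nat i + t = nat i' \<and> nat j = nat j' + t'"
    then show "ovA k hz (i - i') (j - j') hz'" using hz assms by (auto simp: ovA_def)
  next
    assume A: "ovA k hz (i - i') (j - j') hz'"
    show "\<exists>t t'. t < k \<and> t' < k \<and> nat i + t = nat i' \<and> nat j = nat j' + t'"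
      apply (rule exI[of _ "nat (i' - i)"], rule exI[of _ "nat (j - j')"])
      using A hz assms by (auto simp: ovA_def)
  qed
  finally show ?thesis .
next
  assume hz: "\<not> hz" "\<not> hz'"
  have "kcell k (hz, i, j) \<inter> kcell k (hz', i', j') \<noteq> {} \<longleftrightarrow> (\<exists>t t'. t < k \<and> t' < k \<and> nat i + t = nat i' + t' \<and> nat j = nat j')"
    using hz by (auto simp: kcell_def)
  also have "\<dots> \<longleftrightarrow> ovA k hz (i - i') (j - j') hz'"
  proof
    assume "\<exists>t t'. t < k \<and> t' < k \<and> nat i + t = nat i' + t' \<and> nat j = nat j'"
    then show "ovA k hz (i - i') (j - j') hz'" using hz assms by (auto simp: ovA_def)
  next
    assume A: "ovA k hz (i - i') (j - j') hz'"
    show "\<exists>t t'. t < k \<and> t' < k \<and> nat i + t = nat i' + t' \<and> nat j = nat j'"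
      apply (rule exI[of _ "nat (i' - i)"], rule exI[of _ "nat (i - i')"])
      using A hz assms by (auto simp: ovA_def)
  qed
  finally show ?thesis .
qed

lemma kcell_inj:
  assumes "k \<ge> 2" "1 \<le> i" "1 \<le> j" "1 \<le> i'" "1 \<le> j'"
    and eq: "kcell k (hz, i, j) = kcell k (hz', i', j')"
  shows "(hz, i, j) = (hz', i', j')"
proof -
  have m0: "(nat i, nat j) \<in> kcell k (hz, i, j)" using assms(1) by (auto simp: kcell_def)
  have m1: "(nat i', nat j') \<in> kcell k (hz', i', j')" using assms(1) by (auto simp: kcell_def)
  have m2: "(if hz then (nat i, nat j + 1) else (nat i + 1, nat j)) \<in> kcell k (hz, i, j)"
    using assms(1) by (auto simp: kcell_def)
  have rowH: "\<forall>p\<in>kcell k (True, a, b). fst p = nat a" for a b by (auto simp: kcell_def)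
  have colV: "\<forall>p\<in>kcell k (False, a, b). snd p = nat b" for a b by (auto simp: kcell_def)
  have hh: "hz = hz'"
  proof (rule ccontr)
    assume ne: "hz \<noteq> hz'"
    show False
    proof (cases hz)
      case True
      then have F: "\<not> hz'" using ne by simp
      have "(nat i, nat j) \<in> kcell k (False, i', j')" "(nat i, nat j + 1) \<in> kcell k (False, i', j')"
        using m0 m2 eq True F by auto
      then have "nat j = nat j'" "nat j + 1 = nat j'" using colV[of i' j'] by auto
      then show False by simp
    next
      case False
      then have F: "hz'" using ne by simp
      have "(nat i, nat j) \<in> kcell k (True, i', j')" "(nat i + 1, nat j) \<in> kcell k (True, i', j')"
        using m0 m2 eq False F by auto
      then have "nat i = nat i'" "nat i + 1 = nat i'" using rowH[of i' j'] by auto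
      then show False by simp
    qed
  qed
  have "nat i = nat i' \<and> nat j = nat j'"
  proof (cases hz)
    case True
    obtain t where "(nat i, nat j) = (nat i', nat j' + t)" using m0[unfolded eq] True hh unfolding kcell_def by auto
    moreover obtain t' where "(nat i', nat j') = (nat i, nat j + t')" using m1[folded eq] True hh unfolding kcell_def by auto
    ultimately show ?thesis by auto
  next
    case False
    obtain t where "(nat i, nat j) = (nat i' + t, nat j')" using m0[unfolded eq] False hh unfolding kcell_def by auto
    moreover obtain t' where "(nat i', nat j') = (nat i + t', nat j)" using m1[folded eq] False hh unfolding kcell_def by auto
    ultimately show ?thesis by auto
  qed
  then show ?thesis using assms hh by auto
qed

definition TT :: "nat \<Rightarrow> nat \<Rightarrow> nat \<Rightarrow> nat \<Rightarrow> ((nat \<Rightarrow> bool) \<times> (nat \<Rightarrow> int) \<times> (nat \<Rightarrow> int)) set" where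
  "TT k s N M = {(hz, r, c). hz \<in> {..<s} \<rightarrow>\<^sub>E (UNIV::bool set) \<and> r \<in> {..<s} \<rightarrow>\<^sub>E (UNIV::int set)
      \<and> c \<in> {..<s} \<rightarrow>\<^sub>E (UNIV::int set) \<and> (\<forall>a<s. (hz a, r a, c a) \<in> Box k N M)
      \<and> (\<forall>a<s. \<forall>b<s. a < b \<longrightarrow> \<not> ovA k (hz a) (r a - r b) (c a - c b) (hz b))}"

lemma finite_Box: "finite (Box k N M)"
proof -
  have "Box k N M \<subseteq> UNIV \<times> {1..int N + 1} \<times> {1..int M + 1}"
    by (auto simp: Box_def dv_def dh_def split: if_splits)
  then show ?thesis by (rule finite_subset) auto
qed

lemma kcell_nonempty: "k \<ge> 1 \<Longrightarrow> kcell k u \<noteq> {}"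
proof -
  assume "k \<ge> 1"
  then have "\<exists>t. t < k" by (intro exI[of _ 0]) simp
  then show ?thesis by (cases u) (auto simp: kcell_def)
qed

lemma Box_ge1: "(hz, i, j) \<in> Box k N M \<Longrightarrow> 1 \<le> i \<and> 1 \<le> j"
  by (auto simp: Box_def)

lemma countA:
  assumes k: "k \<ge> 2"
  shows "card (TT k s N M) = fact s * kmer_count k s N M"
proof -
  define K where "K = kmers k N M"
  have KB: "K = kcell k ` Box k N M" unfolding K_def using k by (simp add: kmers_eq)
  have finK: "finite K" unfolding KB using finite_Box by simp
  define Cfg where "Cfg = {C. C \<subseteq> K \<and> card C = s \<and> (\<forall>A\<in>C. \<forall>B\<in>C. A \<noteq> B \<longrightarrow> A \<inter> B = {})}"
  have kc: "kmer_count k s N M = card Cfg" unfolding kmer_count_def Cfg_def K_def by simp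
  define LS where "LS = {xs. distinct xs \<and> set xs \<in> Cfg}"
  have finCfg: "finite Cfg"
    by (rule finite_subset[of _ "Pow K"]) (auto simp: Cfg_def finK)
  have finC: "C \<in> Cfg \<Longrightarrow> finite C" for C unfolding Cfg_def using finK finite_subset by auto
  have LSU: "LS = (\<Union>C\<in>Cfg. permutations_of_set C)"
    unfolding LS_def permutations_of_set_def by blast
  have cardLS: "card LS = fact s * card Cfg"
  proof -
    have "card LS = (\<Sum>C\<in>Cfg. card (permutations_of_set C))"
      unfolding LSU
      apply (rule card_UN_disjoint)
      using finCfg apply simp
      using finC apply (simp add: finite_permutations_of_set)
      apply (auto simp: permutations_of_set_def)
      done
    also have "\<dots> = (\<Sum>C\<in>Cfg. fact s)"
    proof (rule sum.cong[OF refl])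
      fix C assume C: "C \<in> Cfg"
      then have "card C = s" unfolding Cfg_def by simp
      then show "card (permutations_of_set C) = fact s" using finC[OF C] by simp
    qed
    finally show ?thesis by simp
  qed
  define F where "F = (\<lambda>(hz, r, c). map (\<lambda>a. kcell k (hz a, r a, c a)) [0..<s])"
  have disj: "kcell k (hz a, r a, c a) \<inter> kcell k (hz b, r b, c b) = {}"
    if u: "(hz, r, c) \<in> TT k s N M" and ab: "a < s" "b < s" "a \<noteq> b" for hz r c a b
  proof -
    have Ba: "(hz a, r a, c a) \<in> Box k N M" and Bb: "(hz b, r b, c b) \<in> Box k N M"
      using u ab unfolding TT_def by auto
    show ?thesis
    proof (cases "a < b")
      case True
      then have "\<not> ovA k (hz a) (r a - r b) (c a - c b) (hz b)" using u ab unfolding TT_def by auto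
      moreover have "kcell k (hz a, r a, c a) \<inter> kcell k (hz b, r b, c b) \<noteq> {} \<longleftrightarrow> ovA k (hz a) (r a - r b) (c a - c b) (hz b)"
        by (rule kcell_ov) (use Box_ge1[OF Ba] Box_ge1[OF Bb] in simp_all)
      ultimately show ?thesis by blast
    next
      case False
      then have "b < a" using ab by auto
      then have "\<not> ovA k (hz b) (r b - r a) (c b - c a) (hz a)" using u ab unfolding TT_def by auto
      moreover have "kcell k (hz b, r b, c b) \<inter> kcell k (hz a, r a, c a) \<noteq> {} \<longleftrightarrow> ovA k (hz b) (r b - r a) (c b - c a) (hz a)"
        by (rule kcell_ov) (use Box_ge1[OF Ba] Box_ge1[OF Bb] in simp_all)
      ultimately show ?thesis by blast
    qed
  qed
  have inj: "inj_on F (TT k s N M)"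
  proof (rule inj_onI)
    fix u v assume u: "u \<in> TT k s N M" and v: "v \<in> TT k s N M" and e: "F u = F v"
    obtain hz r c where uu: "u = (hz, r, c)" by (cases u) auto
    obtain hz' r' c' where vv: "v = (hz', r', c')" by (cases v) auto
    have "(hz a, r a, c a) = (hz' a, r' a, c' a)" if a: "a < s" for a
    proof -
      have "F u ! a = F v ! a" using e by simp
      then have eq: "kcell k (hz a, r a, c a) = kcell k (hz' a, r' a, c' a)"
        using a unfolding uu vv F_def by simp
      have "(hz a, r a, c a) \<in> Box k N M" "(hz' a, r' a, c' a) \<in> Box k N M"
        using u v a unfolding uu vv TT_def by auto
      then show ?thesis using kcell_inj[OF k _ _ _ _ eq] Box_ge1 by blast
    qed
    moreover have "hz \<in> {..<s} \<rightarrow>\<^sub>E UNIV" "r \<in> {..<s} \<rightarrow>\<^sub>E UNIV" "c \<in> {..<s} \<rightarrow>\<^sub>E UNIV"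
      "hz' \<in> {..<s} \<rightarrow>\<^sub>E UNIV" "r' \<in> {..<s} \<rightarrow>\<^sub>E UNIV" "c' \<in> {..<s} \<rightarrow>\<^sub>E UNIV"
      using u v unfolding uu vv TT_def by auto
    ultimately have "hz = hz'" "r = r'" "c = c'"
      by (auto intro: PiE_ext[of _ "{..<s}"])
    then show "u = v" unfolding uu vv by simp
  qed
  have img: "F ` TT k s N M = LS"
  proof
    show "F ` TT k s N M \<subseteq> LS"
    proof
      fix xs assume "xs \<in> F ` TT k s N M"
      then obtain hz r c where u: "(hz, r, c) \<in> TT k s N M" and xs: "xs = F (hz, r, c)" by auto
      have len: "length xs = s" unfolding xs F_def by simp
      have nth: "xs ! a = kcell k (hz a, r a, c a)" if "a < s" for a unfolding xs F_def using that by simp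
      have dj: "xs ! a \<inter> xs ! b = {}" if "a < s" "b < s" "a \<noteq> b" for a b
        using disj[OF u that] nth that by simp
      have ne: "xs ! a \<noteq> {}" if "a < s" for a using nth[OF that] kcell_nonempty k by simp
      have dist: "distinct xs"
        unfolding distinct_conv_nth len
      proof (intro allI impI)
        fix a b assume "a < s" "b < s" "a \<noteq> b"
        then show "xs ! a \<noteq> xs ! b" using dj[of a b] ne[of a] by auto
      qed
      have sub: "set xs \<subseteq> K"
      proof
        fix X assume "X \<in> set xs"
        then obtain a where a: "a < s" "X = xs ! a" using len by (auto simp: in_set_conv_nth)
        have "(hz a, r a, c a) \<in> Box k N M" using u a unfolding TT_def by auto
        then show "X \<in> K" unfolding KB a nth[OF a(1)] by blast
      qed
      have pw: "\<forall>A\<in>set xs. \<forall>B\<in>set xs. A \<noteq> B \<longrightarrow> A \<inter> B = {}"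
      proof (intro ballI impI)
        fix A B assume "A \<in> set xs" "B \<in> set xs" "A \<noteq> B"
        then obtain a b where "a < s" "b < s" "A = xs ! a" "B = xs ! b" using len by (auto simp: in_set_conv_nth)
        then show "A \<inter> B = {}" using dj \<open>A \<noteq> B\<close> by blast
      qed
      have "card (set xs) = s" using distinct_card[OF dist] len by simp
      then show "xs \<in> LS" unfolding LS_def Cfg_def using dist sub pw by auto
    qed
  next
    show "LS \<subseteq> F ` TT k s N M"
    proof
      fix xs assume xs: "xs \<in> LS"
      then have dist: "distinct xs" and C: "set xs \<in> Cfg" unfolding LS_def by auto
      have len: "length xs = s" using distinct_card[OF dist] C unfolding Cfg_def by auto
      define g where "g = inv_into (Box k N M) (kcell k)"
      have inK: "xs ! a \<in> K" if "a < s" for a using C that len unfolding Cfg_def by auto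
      have X: "xs ! a \<in> kcell k ` Box k N M" if "a < s" for a using inK[OF that] KB by simp
      have gB: "g (xs ! a) \<in> Box k N M" if "a < s" for a
        unfolding g_def by (rule inv_into_into[OF X[OF that]])
      have gk: "kcell k (g (xs ! a)) = xs ! a" if "a < s" for a
        unfolding g_def by (rule f_inv_into_f[OF X[OF that]])
      define hz where "hz = (\<lambda>a\<in>{..<s}. fst (g (xs ! a)))"
      define r where "r = (\<lambda>a\<in>{..<s}. fst (snd (g (xs ! a))))"
      define c where "c = (\<lambda>a\<in>{..<s}. snd (snd (g (xs ! a))))"
      have hrc: "(hz a, r a, c a) = g (xs ! a)" if "a < s" for a
        using that unfolding hz_def r_def c_def by simp
      have Fx: "F (hz, r, c) = xs"
        by (rule nth_equalityI) (auto simp: F_def len hrc gk)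
      have "(hz, r, c) \<in> TT k s N M"
        unfolding TT_def
      proof (intro CollectI case_prodI conjI allI impI)
        show "hz \<in> {..<s} \<rightarrow>\<^sub>E UNIV" "r \<in> {..<s} \<rightarrow>\<^sub>E UNIV" "c \<in> {..<s} \<rightarrow>\<^sub>E UNIV"
          unfolding hz_def r_def c_def by auto
      next
        fix a assume "a < s" then show "(hz a, r a, c a) \<in> Box k N M" using hrc gB by simp
      next
        fix a b assume ab: "a < s" "b < s" "a < b"
        then have "xs ! a \<noteq> xs ! b" using dist len by (simp add: nth_eq_iff_index_eq)
        moreover have "xs ! a \<in> set xs" "xs ! b \<in> set xs" using ab len by auto
        ultimately have dj: "xs ! a \<inter> xs ! b = {}" using C unfolding Cfg_def by blast
        have Ba: "(hz a, r a, c a) \<in> Box k N M" and Bb: "(hz b, r b, c b) \<in> Box k N M"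
          using hrc gB ab by auto
        have "kcell k (hz a, r a, c a) \<inter> kcell k (hz b, r b, c b) = {}"
          using dj hrc[OF ab(1)] hrc[OF ab(2)] gk[OF ab(1)] gk[OF ab(2)] by simp
        then show "\<not> ovA k (hz a) (r a - r b) (c a - c b) (hz b)"
        proof -
          have "kcell k (hz a, r a, c a) \<inter> kcell k (hz b, r b, c b) \<noteq> {} \<longleftrightarrow> ovA k (hz a) (r a - r b) (c a - c b) (hz b)"
            by (rule kcell_ov) (use Box_ge1[OF Ba] Box_ge1[OF Bb] in simp_all)
          with \<open>kcell k (hz a, r a, c a) \<inter> kcell k (hz b, r b, c b) = {}\<close> show ?thesis by blast
        qed
      qed
      then show "xs \<in> F ` TT k s N M" using Fx by force
    qed
  qed
  have "card (TT k s N M) = card LS"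
    using bij_betw_same_card[of F "TT k s N M" LS] inj img unfolding bij_betw_def by simp
  then show ?thesis using cardLS kc by simp
qed

definition Prs :: "nat \<Rightarrow> (nat \<times> nat) set" where "Prs s = {(a, b). a < b \<and> b < s}"

definition Wset :: "nat \<Rightarrow> bool \<Rightarrow> bool \<Rightarrow> (int \<times> int) set" where
  "Wset k ha hb = {(x, y). x \<in> {- int k..int k} \<and> y \<in> {- int k..int k} \<and> ovA k ha x y hb}"

definition Zs :: "nat \<Rightarrow> (nat \<Rightarrow> bool) \<Rightarrow> nat \<times> nat \<Rightarrow> (int \<times> int) option set" where
  "Zs k hz e = insert None (Some ` Wset k (hz (fst e)) (hz (snd e)))"

definition Crow :: "(nat \<times> nat \<Rightarrow> (int \<times> int) option) \<Rightarrow> nat \<Rightarrow> (nat \<times> nat \<times> int) set" where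
  "Crow \<phi> s = {(a, b, x). (a, b) \<in> Prs s \<and> (\<exists>y. \<phi> (a, b) = Some (x, y))}"

definition Ccol :: "(nat \<times> nat \<Rightarrow> (int \<times> int) option) \<Rightarrow> nat \<Rightarrow> (nat \<times> nat \<times> int) set" where
  "Ccol \<phi> s = {(a, b, y). (a, b) \<in> Prs s \<and> (\<exists>x. \<phi> (a, b) = Some (x, y))}"

definition sgn\<phi> :: "(nat \<times> nat \<Rightarrow> (int \<times> int) option) \<Rightarrow> nat \<Rightarrow> real" where
  "sgn\<phi> \<phi> s = (-1) ^ card {e \<in> Prs s. \<phi> e \<noteq> None}"

definition RR :: "nat \<Rightarrow> nat \<Rightarrow> (nat \<Rightarrow> bool) \<Rightarrow> (nat \<times> nat \<Rightarrow> (int \<times> int) option) \<Rightarrow> int \<Rightarrow> nat" where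
  "RR k s hz \<phi> N = card (sol1 {..<s} (\<lambda>_. 0) (\<lambda>a. dv k (hz a)) (Crow \<phi> s) N)"

definition CC :: "nat \<Rightarrow> nat \<Rightarrow> (nat \<Rightarrow> bool) \<Rightarrow> (nat \<times> nat \<Rightarrow> (int \<times> int) option) \<Rightarrow> int \<Rightarrow> nat" where
  "CC k s hz \<phi> M = card (sol1 {..<s} (\<lambda>_. 0) (\<lambda>a. dh k (hz a)) (Ccol \<phi> s) M)"

definition gz :: "nat \<times> nat \<Rightarrow> (int \<times> int) option \<Rightarrow> (nat \<Rightarrow> int) \<Rightarrow> (nat \<Rightarrow> int) \<Rightarrow> real" where
  "gz e z r c = (case z of None \<Rightarrow> 1
     | Some w \<Rightarrow> - (if r (fst e) - r (snd e) = fst w \<and> c (fst e) - c (snd e) = snd w then 1 else 0))"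

lemma finite_Prs: "finite (Prs s)"
  by (rule finite_subset[of _ "{..<s} \<times> {..<s}"]) (auto simp: Prs_def)

lemma finite_Wset: "finite (Wset k ha hb)"
  by (rule finite_subset[of _ "{- int k..int k} \<times> {- int k..int k}"]) (auto simp: Wset_def)

lemma finite_Zs: "finite (Zs k hz e)"
  by (simp add: Zs_def finite_Wset)

lemma finite_sol1:
  assumes "finite V" shows "finite (sol1 V p q Cs N)"
proof (rule finite_subset[of _ "PiE V (\<lambda>a. {1 - p a..N - q a})"])
  show "sol1 V p q Cs N \<subseteq> PiE V (\<lambda>a. {1 - p a..N - q a})"
    by (auto simp: sol1_def PiE_def Pi_def)
  show "finite (PiE V (\<lambda>a. {1 - p a..N - q a}))" using assms by (intro finite_PiE) auto
qed

lemma prod_ind: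
  assumes "finite A"
  shows "(\<Prod>e\<in>A. (if P e then 1 else 0 :: real)) = (if \<forall>e\<in>A. P e then 1 else 0)"
  using assms by (induction A rule: finite_induct) auto

lemma prod_sign:
  assumes "finite A"
  shows "(\<Prod>e\<in>A. (if P e then 1 else -1 :: real)) = (-1) ^ card {e \<in> A. \<not> P e}"
  using assms
proof (induction A rule: finite_induct)
  case empty then show ?case by simp
next
  case (insert x A)
  have "{e \<in> insert x A. \<not> P e} = (if P x then {e \<in> A. \<not> P e} else insert x {e \<in> A. \<not> P e})" by auto
  moreover have "x \<notin> {e \<in> A. \<not> P e}" using insert by auto
  ultimately show ?case using insert by (simp add: card_insert_if)
qed

lemma ovA_bounds: "ovA k ha x y hb \<Longrightarrow> x \<in> {- int k..int k} \<and> y \<in> {- int k..int k}"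
  by (auto simp: ovA_def split: if_splits)

lemma sum_Zs:
  "(\<Sum>z\<in>Zs k hz e. gz e z r c)
   = 1 - (if ovA k (hz (fst e)) (r (fst e) - r (snd e)) (c (fst e) - c (snd e)) (hz (snd e)) then 1 else 0)"
proof -
  let ?W = "Wset k (hz (fst e)) (hz (snd e))"
  let ?d = "(r (fst e) - r (snd e), c (fst e) - c (snd e))"
  have "(\<Sum>z\<in>Zs k hz e. gz e z r c) = 1 + (\<Sum>z\<in>Some ` ?W. gz e z r c)"
    unfolding Zs_def by (subst sum.insert) (auto simp: finite_Wset gz_def)
  also have "(\<Sum>z\<in>Some ` ?W. gz e z r c) = (\<Sum>w\<in>?W. gz e (Some w) r c)"
    by (rule sum.reindex_cong[of Some]) auto
  also have "\<dots> = (\<Sum>w\<in>?W. - (if w = ?d then 1 else 0))"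
    by (rule sum.cong[OF refl]) (auto simp: gz_def)
  also have "\<dots> = - (if ?d \<in> ?W then 1 else 0)"
    by (simp add: sum_negf finite_Wset)
  also have "(?d \<in> ?W) = ovA k (hz (fst e)) (r (fst e) - r (snd e)) (c (fst e) - c (snd e)) (hz (snd e))"
    unfolding Wset_def using ovA_bounds by auto
  finally show ?thesis by simp
qed

lemma prod_gz:
  assumes "\<phi> \<in> PiE (Prs s) (Zs k hz)"
  shows "(\<Prod>e\<in>Prs s. gz e (\<phi> e) r c)
     = sgn\<phi> \<phi> s * (if (\<forall>(a,b,x)\<in>Crow \<phi> s. r a - r b = x) \<and> (\<forall>(a,b,y)\<in>Ccol \<phi> s. c a - c b = y) then 1 else 0)"
proof -
  have "(\<Prod>e\<in>Prs s. gz e (\<phi> e) r c)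
     = (\<Prod>e\<in>Prs s. (if \<phi> e = None then 1 else -1) * (if \<phi> e = None \<or> (r (fst e) - r (snd e) = fst (the (\<phi> e)) \<and> c (fst e) - c (snd e) = snd (the (\<phi> e))) then 1 else 0))"
    by (rule prod.cong[OF refl]) (auto simp: gz_def split: option.splits)
  also have "\<dots> = (\<Prod>e\<in>Prs s. (if \<phi> e = None then 1 else -1)) * (\<Prod>e\<in>Prs s. (if \<phi> e = None \<or> (r (fst e) - r (snd e) = fst (the (\<phi> e)) \<and> c (fst e) - c (snd e) = snd (the (\<phi> e))) then 1 else 0))"
    by (rule prod.distrib)
  also have "(\<Prod>e\<in>Prs s. (if \<phi> e = None then 1 else -1 :: real)) = sgn\<phi> \<phi> s"
    unfolding sgn\<phi>_def by (simp add: prod_sign finite_Prs)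
  also have "(\<Prod>e\<in>Prs s. (if \<phi> e = None \<or> (r (fst e) - r (snd e) = fst (the (\<phi> e)) \<and> c (fst e) - c (snd e) = snd (the (\<phi> e))) then 1 else 0 :: real))
     = (if \<forall>e\<in>Prs s. \<phi> e = None \<or> (r (fst e) - r (snd e) = fst (the (\<phi> e)) \<and> c (fst e) - c (snd e) = snd (the (\<phi> e))) then 1 else 0)"
    by (simp add: prod_ind finite_Prs)
  also have "(\<forall>e\<in>Prs s. \<phi> e = None \<or> (r (fst e) - r (snd e) = fst (the (\<phi> e)) \<and> c (fst e) - c (snd e) = snd (the (\<phi> e))))
      \<longleftrightarrow> (\<forall>(a,b,x)\<in>Crow \<phi> s. r a - r b = x) \<and> (\<forall>(a,b,y)\<in>Ccol \<phi> s. c a - c b = y)"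
  proof
    assume H: "\<forall>e\<in>Prs s. \<phi> e = None \<or> (r (fst e) - r (snd e) = fst (the (\<phi> e)) \<and> c (fst e) - c (snd e) = snd (the (\<phi> e)))"
    show "(\<forall>(a,b,x)\<in>Crow \<phi> s. r a - r b = x) \<and> (\<forall>(a,b,y)\<in>Ccol \<phi> s. c a - c b = y)"
    proof (intro conjI ballI)
      fix t assume "t \<in> Crow \<phi> s"
      then obtain a b x y where "t = (a,b,x)" "(a,b) \<in> Prs s" "\<phi> (a,b) = Some (x,y)" unfolding Crow_def by auto
      then show "case t of (a,b,x) \<Rightarrow> r a - r b = x" using H by force
    next
      fix t assume "t \<in> Ccol \<phi> s"
      then obtain a b x y where "t = (a,b,y)" "(a,b) \<in> Prs s" "\<phi> (a,b) = Some (x,y)" unfolding Ccol_def by auto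
      then show "case t of (a,b,y) \<Rightarrow> c a - c b = y" using H by force
    qed
  next
    assume H: "(\<forall>(a,b,x)\<in>Crow \<phi> s. r a - r b = x) \<and> (\<forall>(a,b,y)\<in>Ccol \<phi> s. c a - c b = y)"
    show "\<forall>e\<in>Prs s. \<phi> e = None \<or> (r (fst e) - r (snd e) = fst (the (\<phi> e)) \<and> c (fst e) - c (snd e) = snd (the (\<phi> e)))"
    proof
      fix e assume e: "e \<in> Prs s"
      obtain a b where ab: "e = (a,b)" by (cases e) auto
      show "\<phi> e = None \<or> (r (fst e) - r (snd e) = fst (the (\<phi> e)) \<and> c (fst e) - c (snd e) = snd (the (\<phi> e)))"
      proof (cases "\<phi> e")
        case None then show ?thesis by simp
      next
        case (Some w)
        obtain x y where w: "w = (x,y)" by (cases w) auto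
        have "(a,b,x) \<in> Crow \<phi> s" "(a,b,y) \<in> Ccol \<phi> s"
          using e Some w ab unfolding Crow_def Ccol_def by auto
        then show ?thesis using H Some w ab by auto
      qed
    qed
  qed
  finally show ?thesis by simp
qed

lemma card_filter_sum: "finite A \<Longrightarrow> real (card {x\<in>A. P x}) = (\<Sum>x\<in>A. if P x then 1 else 0)"
  by (simp add: sum.inter_filter[symmetric])

lemma sol1_filter:
  "{r \<in> sol1 V p q {} N. \<forall>(a,b,x)\<in>Cs. r a - r b = x} = sol1 V p q Cs N"
  unfolding sol1_def by auto

lemma countB:
  "real (card (TT k s N M)) =
    (\<Sum>hz\<in>{..<s} \<rightarrow>\<^sub>E (UNIV::bool set). \<Sum>\<phi>\<in>PiE (Prs s) (Zs k hz).
        sgn\<phi> \<phi> s * real (RR k s hz \<phi> N) * real (CC k s hz \<phi> M))"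
proof -
  define HZ where "HZ = {..<s} \<rightarrow>\<^sub>E (UNIV::bool set)"
  define RB where "RB hz = sol1 {..<s} (\<lambda>_. 0) (\<lambda>a. dv k (hz a)) {} N" for hz
  define CB where "CB hz = sol1 {..<s} (\<lambda>_. 0) (\<lambda>a. dh k (hz a)) {} M" for hz
  define Dis where "Dis hz r c = (\<forall>a<s. \<forall>b<s. a < b \<longrightarrow> \<not> ovA k (hz a) (r a - r b) (c a - c b) (hz b))" for hz r c
  have finHZ: "finite HZ" unfolding HZ_def by (intro finite_PiE) auto
  have finRB: "finite (RB hz)" for hz unfolding RB_def by (rule finite_sol1) simp
  have finCB: "finite (CB hz)" for hz unfolding CB_def by (rule finite_sol1) simp
  have TTeq: "TT k s N M = Sigma HZ (\<lambda>hz. {rc \<in> RB hz \<times> CB hz. Dis hz (fst rc) (snd rc)})"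
    unfolding TT_def HZ_def RB_def CB_def Dis_def sol1_def Box_def by auto
  have "real (card (TT k s N M)) = (\<Sum>hz\<in>HZ. real (card {rc \<in> RB hz \<times> CB hz. Dis hz (fst rc) (snd rc)}))"
    unfolding TTeq using finHZ finRB finCB by (simp add: card_SigmaI)
  also have "\<dots> = (\<Sum>hz\<in>HZ. \<Sum>\<phi>\<in>PiE (Prs s) (Zs k hz).
        sgn\<phi> \<phi> s * real (RR k s hz \<phi> N) * real (CC k s hz \<phi> M))"
  proof (rule sum.cong[OF refl])
    fix hz assume "hz \<in> HZ"
    have "real (card {rc \<in> RB hz \<times> CB hz. Dis hz (fst rc) (snd rc)})
        = (\<Sum>rc\<in>RB hz \<times> CB hz. if Dis hz (fst rc) (snd rc) then 1 else 0)"
      using finRB finCB by (simp add: card_filter_sum)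
    also have "\<dots> = (\<Sum>rc\<in>RB hz \<times> CB hz. \<Prod>e\<in>Prs s. \<Sum>z\<in>Zs k hz e. gz e z (fst rc) (snd rc))"
    proof (rule sum.cong[OF refl])
      fix rc :: "(nat \<Rightarrow> int) \<times> (nat \<Rightarrow> int)"
      have "(\<Prod>e\<in>Prs s. \<Sum>z\<in>Zs k hz e. gz e z (fst rc) (snd rc))
          = (\<Prod>e\<in>Prs s. if \<not> ovA k (hz (fst e)) (fst rc (fst e) - fst rc (snd e)) (snd rc (fst e) - snd rc (snd e)) (hz (snd e)) then 1 else 0)"
        by (rule prod.cong[OF refl]) (simp add: sum_Zs)
      also have "\<dots> = (if \<forall>e\<in>Prs s. \<not> ovA k (hz (fst e)) (fst rc (fst e) - fst rc (snd e)) (snd rc (fst e) - snd rc (snd e)) (hz (snd e)) then 1 else 0)"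
        by (rule prod_ind[OF finite_Prs])
      also have "(\<forall>e\<in>Prs s. \<not> ovA k (hz (fst e)) (fst rc (fst e) - fst rc (snd e)) (snd rc (fst e) - snd rc (snd e)) (hz (snd e)))
          = Dis hz (fst rc) (snd rc)"
        unfolding Dis_def Prs_def by auto
      finally show "(if Dis hz (fst rc) (snd rc) then 1 else 0) = (\<Prod>e\<in>Prs s. \<Sum>z\<in>Zs k hz e. gz e z (fst rc) (snd rc))"
        by simp
    qed
    also have "\<dots> = (\<Sum>rc\<in>RB hz \<times> CB hz. \<Sum>\<phi>\<in>PiE (Prs s) (Zs k hz). \<Prod>e\<in>Prs s. gz e (\<phi> e) (fst rc) (snd rc))"
      by (rule sum.cong[OF refl]) (rule prod_sum_PiE[OF finite_Prs finite_Zs])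
    also have "\<dots> = (\<Sum>\<phi>\<in>PiE (Prs s) (Zs k hz). \<Sum>rc\<in>RB hz \<times> CB hz. \<Prod>e\<in>Prs s. gz e (\<phi> e) (fst rc) (snd rc))"
      by (rule sum.swap)
    also have "\<dots> = (\<Sum>\<phi>\<in>PiE (Prs s) (Zs k hz). sgn\<phi> \<phi> s * real (RR k s hz \<phi> N) * real (CC k s hz \<phi> M))"
    proof (rule sum.cong[OF refl])
      fix \<phi> assume \<phi>: "\<phi> \<in> PiE (Prs s) (Zs k hz)"
      let ?R = "\<lambda>r. \<forall>(a,b,x)\<in>Crow \<phi> s. r a - r b = x"
      let ?C = "\<lambda>c. \<forall>(a,b,y)\<in>Ccol \<phi> s. c a - c b = y"
      have "(\<Sum>rc\<in>RB hz \<times> CB hz. \<Prod>e\<in>Prs s. gz e (\<phi> e) (fst rc) (snd rc))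
          = (\<Sum>rc\<in>RB hz \<times> CB hz. sgn\<phi> \<phi> s * ((if ?R (fst rc) then 1 else 0) * (if ?C (snd rc) then 1 else 0)))"
        by (rule sum.cong[OF refl]) (simp add: prod_gz[OF \<phi>])
      also have "\<dots> = sgn\<phi> \<phi> s * (\<Sum>rc\<in>RB hz \<times> CB hz. (if ?R (fst rc) then 1 else 0) * (if ?C (snd rc) then 1 else 0))"
        by (simp add: sum_distrib_left)
      also have "(\<Sum>rc\<in>RB hz \<times> CB hz. (if ?R (fst rc) then 1 else 0) * (if ?C (snd rc) then 1 else (0::real)))
          = (\<Sum>r\<in>RB hz. if ?R r then 1 else 0) * (\<Sum>c\<in>CB hz. if ?C c then 1 else 0)"
        by (simp add: sum_product sum.cartesian_product case_prod_beta)
      also have "(\<Sum>r\<in>RB hz. if ?R r then 1 else 0) = real (RR k s hz \<phi> N)"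
        unfolding RR_def RB_def by (simp add: card_filter_sum[symmetric] finite_sol1 sol1_filter)
      also have "(\<Sum>c\<in>CB hz. if ?C c then 1 else 0) = real (CC k s hz \<phi> M)"
        unfolding CC_def CB_def by (simp add: card_filter_sum[symmetric] finite_sol1 sol1_filter)
      finally show "(\<Sum>rc\<in>RB hz \<times> CB hz. \<Prod>e\<in>Prs s. gz e (\<phi> e) (fst rc) (snd rc))
          = sgn\<phi> \<phi> s * real (RR k s hz \<phi> N) * real (CC k s hz \<phi> M)" by simp
    qed
    finally show "real (card {rc \<in> RB hz \<times> CB hz. Dis hz (fst rc) (snd rc)}) = (\<Sum>\<phi>\<in>PiE (Prs s) (Zs k hz).
        sgn\<phi> \<phi> s * real (RR k s hz \<phi> N) * real (CC k s hz \<phi> M))" .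
  qed
  finally show ?thesis unfolding HZ_def .
qed

lemma ovA_row: "k \<ge> 1 \<Longrightarrow> ovA k ha x y hb \<Longrightarrow> x \<le> dv k hb \<and> 0 \<le> x + dv k ha"
  by (auto simp: ovA_def dv_def split: if_splits)

lemma ovA_col: "k \<ge> 1 \<Longrightarrow> ovA k ha x y hb \<Longrightarrow> y \<le> dh k hb \<and> 0 \<le> y + dh k ha"
  by (auto simp: ovA_def dh_def split: if_splits)

lemma Zs_some:
  assumes "\<phi> \<in> PiE (Prs s) (Zs k hz)" "(a,b) \<in> Prs s" "\<phi> (a,b) = Some (x,y)"
  shows "ovA k (hz a) x y (hz b)"
proof -
  have "\<phi> (a,b) \<in> Zs k hz (a,b)" using assms(1,2) by (auto simp: PiE_def Pi_def)
  then show ?thesis using assms(3) by (auto simp: Zs_def Wset_def)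
qed

lemma good_row:
  assumes "k \<ge> 1" "\<phi> \<in> PiE (Prs s) (Zs k hz)"
  shows "good1 {..<s} (\<lambda>_. 0) (\<lambda>a. dv k (hz a)) (Crow \<phi> s)"
  unfolding good1_def
proof (intro conjI ballI)
  fix a show "0 \<le> dv k (hz a)" using assms(1) by (simp add: dv_def)
next
  fix t assume "t \<in> Crow \<phi> s"
  then obtain a b x y where t: "t = (a,b,x)" "(a,b) \<in> Prs s" "\<phi> (a,b) = Some (x,y)"
    unfolding Crow_def by auto
  have "ovA k (hz a) x y (hz b)" by (rule Zs_some[OF assms(2) t(2,3)])
  then show "case t of (a, b, x) \<Rightarrow> a \<in> {..<s} \<and> b \<in> {..<s} \<and> x + 0 \<le> dv k (hz b) \<and> 0 \<le> x + dv k (hz a)"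
    using ovA_row[OF assms(1)] t by (auto simp: Prs_def)
qed

lemma good_col:
  assumes "k \<ge> 1" "\<phi> \<in> PiE (Prs s) (Zs k hz)"
  shows "good1 {..<s} (\<lambda>_. 0) (\<lambda>a. dh k (hz a)) (Ccol \<phi> s)"
  unfolding good1_def
proof (intro conjI ballI)
  fix a show "0 \<le> dh k (hz a)" using assms(1) by (simp add: dh_def)
next
  fix t assume "t \<in> Ccol \<phi> s"
  then obtain a b x y where t: "t = (a,b,y)" "(a,b) \<in> Prs s" "\<phi> (a,b) = Some (x,y)"
    unfolding Ccol_def by auto
  have "ovA k (hz a) x y (hz b)" by (rule Zs_some[OF assms(2) t(2,3)])
  then show "case t of (a, b, x) \<Rightarrow> a \<in> {..<s} \<and> b \<in> {..<s} \<and> x + 0 \<le> dh k (hz b) \<and> 0 \<le> x + dh k (hz a)"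
    using ovA_col[OF assms(1)] t by (auto simp: Prs_def)
qed

lemma nontriv_row:
  assumes "e \<in> Prs s" "\<phi> e \<noteq> None"
  shows "\<exists>(a,b,x)\<in>Crow \<phi> s. a \<noteq> b"
proof -
  obtain a b where e: "e = (a,b)" by (cases e) auto
  obtain x y where "\<phi> e = Some (x,y)" using assms(2) by auto
  then have "(a,b,x) \<in> Crow \<phi> s" using assms(1) e unfolding Crow_def by auto
  moreover have "a \<noteq> b" using assms(1) e unfolding Prs_def by auto
  ultimately show ?thesis by auto
qed

lemma nontriv_col:
  assumes "e \<in> Prs s" "\<phi> e \<noteq> None"
  shows "\<exists>(a,b,x)\<in>Ccol \<phi> s. a \<noteq> b"
proof -
  obtain a b where e: "e = (a,b)" by (cases e) auto
  obtain x y where "\<phi> e = Some (x,y)" using assms(2) by auto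
  then have "(a,b,y) \<in> Ccol \<phi> s" using assms(1) e unfolding Ccol_def by auto
  moreover have "a \<noteq> b" using assms(1) e unfolding Prs_def by auto
  ultimately show ?thesis by auto
qed

lemma sum_dv_le: "k \<ge> 1 \<Longrightarrow> (\<Sum>a\<in>{..<s}. dv k (hz a) - 0) \<le> int s * (int k - 1)"
  using sum_bounded_above[of "{..<s}" "\<lambda>a. dv k (hz a) - 0" "int k - 1"]
  by (auto simp: dv_def)

lemma sum_dh_le: "k \<ge> 1 \<Longrightarrow> (\<Sum>a\<in>{..<s}. dh k (hz a) - 0) \<le> int s * (int k - 1)"
  using sum_bounded_above[of "{..<s}" "\<lambda>a. dh k (hz a) - 0" "int k - 1"]
  by (auto simp: dh_def)

lemma FD_term_nontriv:
  assumes k: "k \<ge> 1" and \<phi>: "\<phi> \<in> PiE (Prs s) (Zs k hz)" and e: "e \<in> Prs s" "\<phi> e \<noteq> None"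
    and n: "int n \<ge> int s * (int k - 1) + 2 * int s" and m: "int m \<ge> int s * (int k - 1) + 2 * int s"
  shows "(\<Sum>i\<le>2*s. (-1::real)^i * real (2*s choose i) * (real (RR k s hz \<phi> (int (n - i))) * real (CC k s hz \<phi> (int (m - i))))) = 0"
proof -
  obtain P where P1: "degree P + (if \<exists>(a,b,x)\<in>Crow \<phi> s. a \<noteq> b then 1 else 0) \<le> card {..<s}"
    and P2: "\<forall>N. (\<Sum>a\<in>{..<s}. dv k (hz a) - 0) \<le> N \<longrightarrow> real (card (sol1 {..<s} (\<lambda>_. 0) (\<lambda>a. dv k (hz a)) (Crow \<phi> s) N)) = poly P (of_int N)"
    using elim1[OF _ good_row[OF k \<phi>]] by blast
  obtain Q where Q1: "degree Q + (if \<exists>(a,b,x)\<in>Ccol \<phi> s. a \<noteq> b then 1 else 0) \<le> card {..<s}"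
    and Q2: "\<forall>N. (\<Sum>a\<in>{..<s}. dh k (hz a) - 0) \<le> N \<longrightarrow> real (card (sol1 {..<s} (\<lambda>_. 0) (\<lambda>a. dh k (hz a)) (Ccol \<phi> s) N)) = poly Q (of_int N)"
    using elim1[OF _ good_col[OF k \<phi>]] by blast
  have dP: "degree P + 1 \<le> s" using P1 nontriv_row[of e s \<phi>] e by simp
  have dQ: "degree Q + 1 \<le> s" using Q1 nontriv_col[of e s \<phi>] e by simp
  define PQ where "PQ = pcompose P [:real n, -1:] * pcompose Q [:real m, -1:]"
  have dPQ: "degree PQ < 2 * s"
  proof -
    have "degree PQ \<le> degree (pcompose P [:real n, -1:]) + degree (pcompose Q [:real m, -1:])"
      unfolding PQ_def by (rule degree_mult_le)
    also have "\<dots> \<le> degree P + degree Q" using degree_pcompose_le[of P "[:real n, -1:]"] degree_pcompose_le[of Q "[:real m, -1:]"]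
      by simp
    finally show ?thesis using dP dQ by simp
  qed
  have tm: "real (RR k s hz \<phi> (int (n - i))) * real (CC k s hz \<phi> (int (m - i))) = poly PQ (real i)"
    if i: "i \<le> 2 * s" for i
  proof -
    have nn: "0 \<le> int s * (int k - 1)" using k by simp
    have ii: "int i \<le> 2 * int s" using i by simp
    have "int i \<le> int n" "int i \<le> int m" using ii n m nn by linarith+
    then have in_: "i \<le> n" "i \<le> m" by simp_all
    have t1: "(\<Sum>a\<in>{..<s}. dv k (hz a) - 0) \<le> int (n - i)" using sum_dv_le[OF k, where s=s and hz=hz] i n in_ by linarith
    have t2: "(\<Sum>a\<in>{..<s}. dh k (hz a) - 0) \<le> int (m - i)" using sum_dh_le[OF k, where s=s and hz=hz] i m in_ by linarith
    have "real (RR k s hz \<phi> (int (n - i))) = poly P (real n - real i)"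
      using P2 t1 in_ unfolding RR_def by (simp add: of_nat_diff)
    moreover have "real (CC k s hz \<phi> (int (m - i))) = poly Q (real m - real i)"
      using Q2 t2 in_ unfolding CC_def by (simp add: of_nat_diff)
    ultimately show ?thesis unfolding PQ_def by (simp add: poly_pcompose)
  qed
  have "(\<Sum>i\<le>2*s. (-1::real)^i * real (2*s choose i) * (real (RR k s hz \<phi> (int (n - i))) * real (CC k s hz \<phi> (int (m - i)))))
      = (\<Sum>i\<le>2*s. (-1::real)^i * real (2*s choose i) * poly PQ (real i))"
    by (rule sum.cong[OF refl]) (simp add: tm)
  also have "\<dots> = (-1)^(2*s) * fact (2*s) * coeff PQ (2*s)"
    by (rule FD_poly) (use dPQ in simp)
  also have "coeff PQ (2*s) = 0" using dPQ by (simp add: coeff_eq_0)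
  finally show ?thesis by simp
qed

lemma sol1_empty: "sol1 V p q {} N = {r \<in> V \<rightarrow>\<^sub>E (UNIV::int set). \<forall>a\<in>V. 1 \<le> r a + p a \<and> r a + q a \<le> N}"
  by (simp add: sol1_def)

lemma FD_term_triv:
  assumes k: "k \<ge> 1" and triv: "\<forall>e\<in>Prs s. \<phi> e = None"
    and n: "int n \<ge> int s * (int k - 1) + 2 * int s" and m: "int m \<ge> int s * (int k - 1) + 2 * int s"
  shows "(\<Sum>i\<le>2*s. (-1::real)^i * real (2*s choose i) * (real (RR k s hz \<phi> (int (n - i))) * real (CC k s hz \<phi> (int (m - i))))) = fact (2*s)"
proof -
  have cr: "Crow \<phi> s = {}" "Ccol \<phi> s = {}" using triv unfolding Crow_def Ccol_def by auto
  define F where "F a = [:real n - of_int (dv k (hz a)), -1:] * [:real m - of_int (dh k (hz a)), -1:]" for a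
  define PP where "PP = (\<Prod>a\<in>{..<s}. F a)"
  have F0: "F a \<noteq> 0" for a unfolding F_def by (simp add: pCons_eq_0_iff)
  have dF: "degree (F a) = 2" for a unfolding F_def by (simp add: degree_mult_eq)
  have lF: "lead_coeff (F a) = 1" for a unfolding F_def by (simp add: lead_coeff_mult)
  have dPP: "degree PP = 2 * s" unfolding PP_def using F0 dF by (simp add: degree_prod_sum_eq)
  have lPP: "coeff PP (2 * s) = 1" using lead_coeff_prod[of F "{..<s}"] lF dPP unfolding PP_def by simp
  have tm: "real (RR k s hz \<phi> (int (n - i))) * real (CC k s hz \<phi> (int (m - i))) = poly PP (real i)"
    if i: "i \<le> 2 * s" for i
  proof -
    have nn: "0 \<le> int s * (int k - 1)" using k by simp
    have ii: "int i \<le> 2 * int s" using i by simp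
    have "int i \<le> int n" "int i \<le> int m" using ii n m nn by linarith+
    then have in_: "i \<le> n" "i \<le> m" by simp_all
    have t1: "dv k (hz a) \<le> int (n - i) \<and> dh k (hz a) \<le> int (m - i)" if a: "a < s" for a
    proof -
      define X where "X = int s * (int k - 1)"
      have "1 * (int k - 1) \<le> int s * (int k - 1)"
        by (rule mult_right_mono) (use a k in auto)
      then have x1: "int k - 1 \<le> X" unfolding X_def by simp
      have x2: "X + 2 * int s \<le> int n" "X + 2 * int s \<le> int m" using n m unfolding X_def by auto
      have d: "dv k (hz a) \<le> int k - 1" "dh k (hz a) \<le> int k - 1" using k by (auto simp: dv_def dh_def)
      have "int (n - i) = int n - int i" "int (m - i) = int m - int i" using in_ by auto
      then show ?thesis using x1 x2 d ii by linarith
    qed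
    have e1: "real (nat (int (n - i) - dv k (hz a))) = real n - real i - of_int (dv k (hz a))" if "a < s" for a
      using t1[OF that] in_ by (simp add: of_nat_diff)
    have e2: "real (nat (int (m - i) - dh k (hz a))) = real m - real i - of_int (dh k (hz a))" if "a < s" for a
      using t1[OF that] in_ by (simp add: of_nat_diff)
    have "real (RR k s hz \<phi> (int (n - i))) = (\<Prod>a\<in>{..<s}. real n - real i - of_int (dv k (hz a)))"
    proof -
      have "RR k s hz \<phi> (int (n - i)) = (\<Prod>a\<in>{..<s}. nat (int (n - i) - (dv k (hz a) - 0)))"
        unfolding RR_def cr sol1_empty by (rule box_count) simp
      then have "real (RR k s hz \<phi> (int (n - i))) = (\<Prod>a\<in>{..<s}. real (nat (int (n - i) - (dv k (hz a) - 0))))"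
        by (simp only: of_nat_prod)
      also have "\<dots> = (\<Prod>a\<in>{..<s}. real n - real i - of_int (dv k (hz a)))"
        by (rule prod.cong[OF refl]) (simp add: e1)
      finally show ?thesis .
    qed
    moreover have "real (CC k s hz \<phi> (int (m - i))) = (\<Prod>a\<in>{..<s}. real m - real i - of_int (dh k (hz a)))"
    proof -
      have "CC k s hz \<phi> (int (m - i)) = (\<Prod>a\<in>{..<s}. nat (int (m - i) - (dh k (hz a) - 0)))"
        unfolding CC_def cr sol1_empty by (rule box_count) simp
      then have "real (CC k s hz \<phi> (int (m - i))) = (\<Prod>a\<in>{..<s}. real (nat (int (m - i) - (dh k (hz a) - 0))))"
        by (simp only: of_nat_prod)
      also have "\<dots> = (\<Prod>a\<in>{..<s}. real m - real i - of_int (dh k (hz a)))"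
        by (rule prod.cong[OF refl]) (simp add: e2)
      finally show ?thesis .
    qed
    moreover have "poly (F a) (real i) = (real n - real i - of_int (dv k (hz a))) * (real m - real i - of_int (dh k (hz a)))" for a
      unfolding F_def by (simp add: algebra_simps)
    ultimately show ?thesis unfolding PP_def
      by (simp add: poly_prod prod.distrib[symmetric])
  qed
  have "(\<Sum>i\<le>2*s. (-1::real)^i * real (2*s choose i) * (real (RR k s hz \<phi> (int (n - i))) * real (CC k s hz \<phi> (int (m - i)))))
      = (\<Sum>i\<le>2*s. (-1::real)^i * real (2*s choose i) * poly PP (real i))"
    by (rule sum.cong[OF refl]) (simp add: tm)
  also have "\<dots> = (-1)^(2*s) * fact (2*s) * coeff PP (2*s)"
    by (rule FD_poly) (use dPP in simp)
  finally show ?thesis using lPP by simp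
qed

lemma sum_phi:
  fixes G :: "(nat \<times> nat \<Rightarrow> (int \<times> int) option) \<Rightarrow> real"
  assumes "\<And>\<phi>. \<phi> \<in> PiE (Prs s) (Zs k hz) \<Longrightarrow> G \<phi> = (if \<forall>e\<in>Prs s. \<phi> e = None then c else 0)"
  shows "(\<Sum>\<phi>\<in>PiE (Prs s) (Zs k hz). sgn\<phi> \<phi> s * G \<phi>) = c"
proof -
  define \<phi>0 where "\<phi>0 = (\<lambda>e\<in>Prs s. (None :: (int \<times> int) option))"
  have fin: "finite (PiE (Prs s) (Zs k hz))" by (intro finite_PiE finite_Prs finite_Zs)
  have in0: "\<phi>0 \<in> PiE (Prs s) (Zs k hz)" unfolding \<phi>0_def by (auto simp: Zs_def)
  have uniq: "\<phi> = \<phi>0" if "\<phi> \<in> PiE (Prs s) (Zs k hz)" "\<forall>e\<in>Prs s. \<phi> e = None" for \<phi>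
    using that unfolding \<phi>0_def by (auto simp: PiE_def extensional_def fun_eq_iff)
  have "(\<Sum>\<phi>\<in>PiE (Prs s) (Zs k hz). sgn\<phi> \<phi> s * G \<phi>)
      = (\<Sum>\<phi>\<in>PiE (Prs s) (Zs k hz). if \<phi> = \<phi>0 then sgn\<phi> \<phi>0 s * c else 0)"
  proof (rule sum.cong[OF refl])
    fix \<phi> assume \<phi>: "\<phi> \<in> PiE (Prs s) (Zs k hz)"
    show "sgn\<phi> \<phi> s * G \<phi> = (if \<phi> = \<phi>0 then sgn\<phi> \<phi>0 s * c else 0)"
    proof (cases "\<forall>e\<in>Prs s. \<phi> e = None")
      case True
      then show ?thesis using uniq[OF \<phi> True] assms[OF \<phi>] by simp
    next
      case False
      then have "\<phi> \<noteq> \<phi>0" unfolding \<phi>0_def by auto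
      then show ?thesis using assms[OF \<phi>] False by simp
    qed
  qed
  also have "\<dots> = sgn\<phi> \<phi>0 s * c" using fin in0 by (simp add: sum.delta')
  also have "sgn\<phi> \<phi>0 s = 1" unfolding sgn\<phi>_def \<phi>0_def by simp
  finally show ?thesis by simp
qed

theorem theorem1:
  fixes k s n m :: nat
  assumes "k \<ge> 2" and "n \<ge> 1" and "m \<ge> 1"
    and "n \<ge> (k + 1) * s" and "m \<ge> (k + 1) * s"
  shows "(\<Sum>i = 0..2 * s. (-1::real) ^ i * real (2 * s choose i)
            * real (kmer_count k s (n - i) (m - i)))
         = 2 ^ s * fact (2 * s) / fact s"
proof -
  have k1: "k \<ge> 1" using assms(1) by simp
  have conv: "int ((k + 1) * s) = int s * (int k - 1) + 2 * int s" by (simp add: algebra_simps)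
  have nb: "int n \<ge> int s * (int k - 1) + 2 * int s" using assms(4) conv by linarith
  have mb: "int m \<ge> int s * (int k - 1) + 2 * int s" using assms(5) conv by linarith
  define HZ where "HZ = {..<s} \<rightarrow>\<^sub>E (UNIV::bool set)"
  define G where "G hz \<phi> = (\<Sum>i\<le>2*s. (-1::real)^i * real (2*s choose i) * (real (RR k s hz \<phi> (int (n - i))) * real (CC k s hz \<phi> (int (m - i)))))" for hz \<phi>
  have kc: "real (kmer_count k s N M) = real (card (TT k s N M)) / fact s" for N M
    using countA[OF assms(1), of s N M] by (simp add: field_simps)
  have "(\<Sum>i = 0..2 * s. (-1::real) ^ i * real (2 * s choose i) * real (kmer_count k s (n - i) (m - i)))
      = (\<Sum>i\<le>2 * s. (-1::real) ^ i * real (2 * s choose i) *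
          (\<Sum>hz\<in>HZ. \<Sum>\<phi>\<in>PiE (Prs s) (Zs k hz). sgn\<phi> \<phi> s * real (RR k s hz \<phi> (int (n - i))) * real (CC k s hz \<phi> (int (m - i))))) / fact s"
    by (simp add: atLeast0AtMost kc countB HZ_def times_divide_eq_right flip: sum_divide_distrib)
  also have "(\<Sum>i\<le>2 * s. (-1::real) ^ i * real (2 * s choose i) *
          (\<Sum>hz\<in>HZ. \<Sum>\<phi>\<in>PiE (Prs s) (Zs k hz). sgn\<phi> \<phi> s * real (RR k s hz \<phi> (int (n - i))) * real (CC k s hz \<phi> (int (m - i)))))
      = (\<Sum>i\<le>2 * s. \<Sum>hz\<in>HZ. \<Sum>\<phi>\<in>PiE (Prs s) (Zs k hz). sgn\<phi> \<phi> s * ((-1::real) ^ i * real (2 * s choose i) * (real (RR k s hz \<phi> (int (n - i))) * real (CC k s hz \<phi> (int (m - i))))))"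
    by (simp add: sum_distrib_left algebra_simps)
  also have "\<dots> = (\<Sum>hz\<in>HZ. \<Sum>i\<le>2 * s. \<Sum>\<phi>\<in>PiE (Prs s) (Zs k hz). sgn\<phi> \<phi> s * ((-1::real) ^ i * real (2 * s choose i) * (real (RR k s hz \<phi> (int (n - i))) * real (CC k s hz \<phi> (int (m - i))))))"
    by (rule sum.swap)
  also have "\<dots> = (\<Sum>hz\<in>HZ. \<Sum>\<phi>\<in>PiE (Prs s) (Zs k hz). sgn\<phi> \<phi> s * G hz \<phi>)"
  proof (rule sum.cong[OF refl])
    fix hz
    show "(\<Sum>i\<le>2 * s. \<Sum>\<phi>\<in>PiE (Prs s) (Zs k hz). sgn\<phi> \<phi> s * ((-1::real) ^ i * real (2 * s choose i) * (real (RR k s hz \<phi> (int (n - i))) * real (CC k s hz \<phi> (int (m - i))))))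
        = (\<Sum>\<phi>\<in>PiE (Prs s) (Zs k hz). sgn\<phi> \<phi> s * G hz \<phi>)"
      unfolding G_def by (subst sum.swap) (simp add: sum_distrib_left)
  qed
  also have "\<dots> = (\<Sum>hz\<in>HZ. fact (2 * s))"
  proof (rule sum.cong[OF refl])
    fix hz
    show "(\<Sum>\<phi>\<in>PiE (Prs s) (Zs k hz). sgn\<phi> \<phi> s * G hz \<phi>) = fact (2 * s)"
    proof (rule sum_phi)
      fix \<phi> assume \<phi>: "\<phi> \<in> PiE (Prs s) (Zs k hz)"
      show "G hz \<phi> = (if \<forall>e\<in>Prs s. \<phi> e = None then fact (2 * s) else 0)"
      proof (cases "\<forall>e\<in>Prs s. \<phi> e = None")
        case True
        then show ?thesis unfolding G_def using FD_term_triv[OF k1 True nb mb] by simp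
      next
        case False
        then obtain e where e: "e \<in> Prs s" "\<phi> e \<noteq> None" by auto
        then show ?thesis unfolding G_def using FD_term_nontriv[OF k1 \<phi> e nb mb] False by simp
      qed
    qed
  qed
  also have "\<dots> = 2 ^ s * fact (2 * s)"
  proof -
    have "card HZ = 2 ^ s" unfolding HZ_def by (simp add: card_PiE)
    then show ?thesis by simp
  qed
  finally show ?thesis by simp
qed

end
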